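(* Let $a<b$ be real, $L:=b-a$, and for real $x$ and real $x_1\ne x_2$ define $$V(x,x_1,x_2):=\frac{e^{-2|x_1-x|}+e^{-2|x_2-x|}-2e^{-(|x_1-x|+|x_2-x|+|x_1-x_2|)}}{1-e^{-2|x_1-x_2|}}.$$ Let $q:=\frac{-e^{-L}+\sqrt{e^{-2L}+8e^{-L}}}{2}$. Then $$\sup_{x_1,x_2\in\mathbb{R},\,x_1\ne x_2}\ \min_{x\in[a,b]}V(x,x_1,x_2)=q,$$ and the supremum is attained at $x_1=a-\tfrac12\ln q$, $x_2=b+\tfrac12\ln q$ (which satisfy $a\le x_1<x_2\le b$).
   Context: For the exponential kernel $K(x,y)=e^{-|x-y|}$ on $\mathbb{R}$ and $\mathcal{X}=\{x_1,x_2\}$, $V(x,x_1,x_2)$ equals $K(x,x)-\operatorname{dist}^2(K(x,\cdot),\operatorname{span}\{K(x_1,\cdot),K(x_2,\cdot)\})$ in the RKHS of $K$, so maximizing $\min_{x\in[a,b]}V$ is minimizing the worst-case reconstruction error on $[a,b]$ measured in the maximum norm. *)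

theory Defs
  imports "HOL-Analysis.Analysis"
begin

definition V :: "real \<Rightarrow> real \<Rightarrow> real \<Rightarrow> real" where
  "V x x1 x2 =
     (exp (-2 * \<bar>x1 - x\<bar>) + exp (-2 * \<bar>x2 - x\<bar>)
       - 2 * exp (-(\<bar>x1 - x\<bar> + \<bar>x2 - x\<bar> + \<bar>x1 - x2\<bar>)))
     / (1 - exp (-2 * \<bar>x1 - x2\<bar>))"

end

theory Submission
  imports Defs
begin

lemma V_sym: "V x y1 y2 = V x y2 y1"
  unfolding V_def by (simp add: abs_minus_commute add_ac)
lemma V_refl: "V (-x) y1 y2 = V x (-y2) (-y1)"
  unfolding V_def by (simp add: abs_minus_commute add_ac)

lemma exp2: "exp (-2 * (u::real)) = (exp (-u))^2"
  by (simp add: power2_eq_square flip: exp_add)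

lemma V_out1: "x \<le> y1 \<Longrightarrow> y1 < y2 \<Longrightarrow> V x y1 y2 = exp (-2*(y1-x))"
proof -
  assume h: "x \<le> y1" "y1 < y2"
  have "exp (-(\<bar>y1 - x\<bar> + \<bar>y2 - x\<bar> + \<bar>y1 - y2\<bar>)) = exp (-2*(y1-x)) * exp (-2 * \<bar>y1 - y2\<bar>)"
    using h by (simp add: abs_if algebra_simps flip: exp_add)
  moreover have "exp (-2 * \<bar>y2 - x\<bar>) = exp (-2*(y1-x)) * exp (-2 * \<bar>y1 - y2\<bar>)"
    using h by (simp add: abs_if algebra_simps flip: exp_add)
  moreover have "exp (-2 * \<bar>y1 - y2\<bar>) < 1" using h by simp
  ultimately show ?thesis unfolding V_def using h
    by (simp add: field_simps abs_if)
qed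

lemma V_out2: "y2 \<le> x \<Longrightarrow> y1 < y2 \<Longrightarrow> V x y1 y2 = exp (-2*(x-y2))"
  using V_out1[of "-x" "-y2" "-y1"] V_refl[of x "-y2" "-y1"] V_sym by simp

lemma div_le_div: "0 < (y::real) \<Longrightarrow> 0 < w \<Longrightarrow> x*w \<le> z*y \<Longrightarrow> x/y \<le> z/w"
  by (simp add: frac_le_eq divide_nonpos_pos)

lemma V_out1s: "x \<le> y1 \<Longrightarrow> y1 < y2 \<Longrightarrow> V x y1 y2 = (exp (-(y1-x)))^2"
  using V_out1 exp2 by metis
lemma V_out2s: "y2 \<le> x \<Longrightarrow> y1 < y2 \<Longrightarrow> V x y1 y2 = (exp (-(x-y2)))^2"
  using V_out2 exp2 by metis

definition F :: "real \<Rightarrow> real \<Rightarrow> real" where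
  "F a b = (a^2 + b^2 - 2*a^2*b^2) / (1 - a^2*b^2)"

lemma V_in: "y1 \<le> x \<Longrightarrow> x \<le> y2 \<Longrightarrow> y1 < y2 \<Longrightarrow> V x y1 y2 = F (exp (-(x-y1))) (exp (-(y2-x)))"
proof -
  assume h: "y1 \<le> x" "x \<le> y2" "y1 < y2"
  have e: "exp (-(\<bar>y1 - x\<bar> + \<bar>y2 - x\<bar> + \<bar>y1 - y2\<bar>)) = (exp (-(x-y1)))^2 * (exp (-(y2-x)))^2"
    using h by (simp add: power2_eq_square algebra_simps flip: exp_add)
  have e2: "exp (-2 * \<bar>y1 - y2\<bar>) = (exp (-(x-y1)))^2 * (exp (-(y2-x)))^2"
    using h by (simp add: power2_eq_square algebra_simps flip: exp_add)
  have a1: "exp (-2*\<bar>y1-x\<bar>) = (exp(-(x-y1)))^2" using h exp2[of "x-y1"] by simp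
  have a2: "exp (-2*\<bar>y2-x\<bar>) = (exp(-(y2-x)))^2" using h exp2[of "y2-x"] by simp
  show ?thesis unfolding V_def F_def e e2 a1 a2 by simp
qed

lemma F_lower: "0 < a \<Longrightarrow> 0 < b \<Longrightarrow> a*b < 1 \<Longrightarrow> F a b \<ge> 2*(a*b)/(1+a*b)"
proof -
  assume h: "0 < a" "0 < b" "a*b < 1"
  have p: "0 < 1 - a^2*b^2" using h by (simp add: power_mult_distrib[symmetric]) (metis abs_of_pos abs_square_less_1 h(3) mult_pos_pos less_eq_real_def power2_eq_square) 
  have "(a^2 + b^2 - 2*a^2*b^2) * (1+a*b) - 2*(a*b)*(1 - a^2*b^2) = (a^2+b^2-2*a*b)*(1+a*b)"
    by (simp add: algebra_simps power2_eq_square)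
  moreover have "0 \<le> a^2+b^2-2*a*b" using sum_squares_ge_zero[of "a-b" 0] by (simp add: power2_eq_square algebra_simps)
  moreover have "0 \<le> 1 + a*b" using h by simp
  ultimately have "2*(a*b)*(1 - a^2*b^2) \<le> (a^2 + b^2 - 2*a^2*b^2) * (1+a*b)"
    by (smt (verit) mult_nonneg_nonneg)
  moreover have "0 < 1 + a*b" using h by (simp add: add_pos_pos)
  ultimately show ?thesis unfolding F_def using p h by (intro div_le_div) (auto simp: mult.commute)
qed

lemma F_upper: "0 < a \<Longrightarrow> a \<le> b \<Longrightarrow> b \<le> 1 \<Longrightarrow> a*b < 1 \<Longrightarrow> F a b \<le> 2*b^2/(1+b^2)"
proof -
  assume h: "0 < a" "a \<le> b" "b \<le> 1" "a*b < 1"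
  have p: "0 < 1 - a^2*b^2" using h by (simp add: power_mult_distrib[symmetric]) (metis abs_of_pos abs_square_less_1 h(4) mult_pos_pos less_eq_real_def power2_eq_square order_less_le_trans) 
  have "(a^2 + b^2 - 2*a^2*b^2) * (1+b^2) \<le> 2*b^2*(1 - a^2*b^2)"
  proof -
    have "(a^2 + b^2 - 2*a^2*b^2) * (1+b^2) - 2*b^2*(1 - a^2*b^2) = (a^2-b^2)*(1-b^2)"
      by (simp add: algebra_simps power2_eq_square)
    moreover have "a^2 \<le> b^2" using h by (simp add: power_mono)
    moreover have "b^2 \<le> 1" using h by (simp add: power_le_one)
    ultimately show ?thesis by (smt (verit) mult_nonpos_nonneg)
  qed
  then show ?thesis unfolding F_def using p h by (intro div_le_div) (auto simp: mult.commute add_pos_nonneg)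
qed

lemma F_nonneg: "0 < a \<Longrightarrow> 0 < b \<Longrightarrow> a*b < 1 \<Longrightarrow> F a b \<ge> 0"
  using F_lower[of a b] by (smt (verit) divide_nonneg_pos mult_pos_pos)

lemma V_nonneg: "y1 \<noteq> y2 \<Longrightarrow> 0 \<le> V x y1 y2"
proof -
  have *: "0 \<le> V x y1 y2" if "y1 < y2" for y1 y2
  proof -
    consider "x \<le> y1" | "y2 \<le> x" | "y1 \<le> x" "x \<le> y2" by linarith
    then show ?thesis
    proof cases
      case 1 then show ?thesis using V_out1[OF 1 that] by simp
    next
      case 2 then show ?thesis using V_out2[OF 2 that] by simp
    next
      case 3
      have "exp (-(x-y1)) * exp (-(y2-x)) = exp (-(y2-y1))" by (simp flip: exp_add)
      also have "\<dots> < 1" using that by simp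
      finally show ?thesis using V_in[OF 3 that] by (simp add: F_nonneg)
    qed
  qed
  assume "y1 \<noteq> y2"
  then show ?thesis using *[of y1 y2] *[of y2 y1] V_sym[of x y1 y2] by linarith
qed

lemma qfacts:
  fixes t q :: real
  assumes "0 < t" "t < 1" "q = (- t + sqrt (t^2 + 8*t)) / 2"
  shows "0 < q \<and> q < 1 \<and> t < q \<and> q^2 + t*q = 2*t"
proof -
  define s where "s = sqrt (t^2 + 8*t)"
  have s0: "0 \<le> s" unfolding s_def using assms by simp
  have s2: "s^2 = t^2 + 8*t" unfolding s_def using assms by simp
  have "t^2 < s^2" using s2 assms by simp
  hence ts: "t < s" using s0 by (meson power_less_imp_less_base)
  have "s^2 < (2+t)^2" using s2 assms by (simp add: power2_eq_square algebra_simps)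
  moreover have "0 \<le> 2+t" using assms by simp
  ultimately have s2t: "s < 2+t" using power_less_imp_less_base by blast
  have qd: "q = (s - t)/2" using assms s_def by simp
  have eq: "q^2 + t*q = 2*t" unfolding qd using s2 by (simp add: power2_eq_square field_simps)
  have "0 < q" using ts qd by simp
  moreover have "q < 1" using s2t qd by simp
  moreover have "t < q"
  proof (rule ccontr)
    assume "\<not> t < q"
    hence "q \<le> t" by simp
    hence "q^2 + t*q \<le> t^2 + t*t" using \<open>0 < q\<close> by (intro add_mono power_mono mult_left_mono) (auto simp: assms(1) less_imp_le)
    moreover have "t^2 + t*t < 2*t" using assms by (simp add: power2_eq_square)
    ultimately show False using eq by simp
  qed
  ultimately show ?thesis using eq by simp
qed

lemma K1:
  fixes q t w :: real
  assumes q: "0 < q" "q < 1" "q^2 + t*q = 2*t" and w: "0 < w" "w*q \<le> t"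
  shows "2*w/(1+w) \<le> q"
proof -
  have "w*(2-q)*q = (w*q)*(2-q)" by simp
  also have "\<dots> \<le> t*(2-q)" using w q by (intro mult_right_mono) auto
  also have "\<dots> = q*q" using q by (simp add: power2_eq_square algebra_simps)
  finally have "w*(2-q) \<le> q" using q by simp
  then have "2*w \<le> q*(1+w)" by (simp add: algebra_simps)
  then show ?thesis using w by (simp add: pos_divide_le_eq mult.commute)
qed

lemma half:
  fixes a b y1 y2 t q :: real
  assumes ab: "a < b" and y: "y1 < y2" and m: "y1 + y2 \<le> 2*b"
    and t: "t = exp (-(b-a))" and q: "0 < q" "q < 1" "t < q" "q^2 + t*q = 2*t"
  shows "\<exists>x\<in>{a..b}. V x y1 y2 \<le> q"
proof -
  have t0: "0 < t" using t by simp
  have t1: "t < 1" using t ab by simp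
  have tt: "t^2 < t" using t0 t1 by (simp add: power2_eq_square)
  have K: "2*w/(1+w) \<le> q" if "0 < w" "w*q \<le> t" for w using K1[OF q(1,2,4) that] .
  show ?thesis
  proof (cases "y2 \<le> a")
    case True
    have "V b y1 y2 = exp (-2*(b-y2))" using V_out2[of y2 b y1] True ab y by simp
    also have "\<dots> \<le> exp (-2*(b-a))" using True by simp
    also have "\<dots> = t^2" using t exp2[of "b-a"] by simp
    also have "\<dots> \<le> q" using tt q by simp
    finally show ?thesis using ab by (intro bexI[of _ b]) auto
  next
    case y2a: False
    show ?thesis
    proof (cases "2*a \<le> y1 + y2")
      case True
      define mm where "mm = (y1+y2)/2"
      define w where "w = exp (-(y2-y1))"
      have w0: "0 < w" unfolding w_def by simp
      have w1: "w < 1" unfolding w_def using y by simp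
      have mab: "a \<le> mm" "mm \<le> b" unfolding mm_def using True m by auto
      define e where "e = exp (-(mm-y1))"
      have e2: "e^2 = w" unfolding e_def w_def mm_def by (simp add: power2_eq_square flip: exp_add)
      have mm2: "y2 - mm = mm - y1" unfolding mm_def by (simp add: field_simps)
      have "V mm y1 y2 = F e e" proof -
        have "y1 \<le> mm" "mm \<le> y2" unfolding mm_def using y by auto
        then show ?thesis using V_in[of y1 mm y2] y unfolding e_def mm2 by simp
      qed
      also have "\<dots> = 2*w/(1+w)"
      proof -
        have "F e e = (2*w - 2*w^2)/(1-w^2)" unfolding F_def using e2 by (simp add: power2_eq_square algebra_simps)
        also have "\<dots> = (2*w*(1-w))/((1+w)*(1-w))" by (simp add: algebra_simps power2_eq_square)
        also have "\<dots> = 2*w/(1+w)" using w1 by simp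
        finally show ?thesis .
      qed
      finally have Vm: "V mm y1 y2 = 2*w/(1+w)" .
      show ?thesis
      proof (cases "w*q \<le> t")
        case True
        then show ?thesis using K[OF w0 True] Vm mab by (intro bexI[of _ mm]) auto
      next
        case False
        hence wq: "t < w*q" by simp
        consider (C1) "a \<le> y1" "y2 \<le> b" | (C2) "y1 < a" | (C3) "a \<le> y1" "b < y2" by linarith
        then show ?thesis
        proof cases
          case C1
          define A where "A = exp (-(y1-a))"
          define B where "B = exp (-(b-y2))"
          have VA: "V a y1 y2 = A^2" using V_out1s[of a y1 y2] C1 y unfolding A_def by (simp add: exp2)
          have VB: "V b y1 y2 = B^2" using V_out2s[of y2 b y1] C1 y unfolding B_def by (simp add: exp2)
          have "A*B*w = t" unfolding A_def B_def w_def t by (simp add: algebra_simps flip: exp_add)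
          hence "A*B*w < q*w" using wq by (simp add: mult.commute)
          hence ABq: "A*B < q" using w0 by simp
          have A0: "0 < A" "0 < B" unfolding A_def B_def by auto
          show ?thesis
          proof (cases "A^2 \<le> q")
            case True then show ?thesis using VA ab by (intro bexI[of _ a]) auto
          next
            case False
            have "B^2 \<le> q"
            proof (rule ccontr)
              assume "\<not> B^2 \<le> q"
              hence "q*q < A^2*B^2" using False q by (intro mult_strict_mono) auto
              moreover have "(A*B)^2 < q^2" using ABq A0 by (intro power_strict_mono) auto
              moreover have "(A*B)^2 = A^2*B^2" by (simp add: power_mult_distrib)
              moreover have "q^2 = q*q" by (simp add: power2_eq_square)
              ultimately show False by linarith
            qed
            then show ?thesis using VB ab by (intro bexI[of _ b]) auto
          qed
        next
          case C2
          have y2b: "y2 \<le> b"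
          proof (rule ccontr)
            assume "\<not> y2 \<le> b"
            hence "w < t" unfolding w_def t using C2 by simp
            moreover have "w*q < w" using w0 q by simp
            ultimately show False using wq by simp
          qed
          define B where "B = exp (-(b-y2))"
          have VB: "V b y1 y2 = B^2" using V_out2s[of y2 b y1] y2b y unfolding B_def by (simp add: exp2)
          have "B*w = exp (-(b-y1))" unfolding B_def w_def by (simp add: algebra_simps flip: exp_add)
          also have "\<dots> < t" unfolding t using C2 by simp
          finally have "B*w < q*w" using wq by (simp add: mult.commute)
          hence Bq: "B < q" using w0 by simp
          have "B^2 \<le> B" unfolding B_def using y2b by (simp add: power2_eq_square)
          then show ?thesis using VB Bq ab by (intro bexI[of _ b]) auto
        next
          case C3
          define A where "A = exp (-(y1-a))"
          have VA: "V a y1 y2 = A^2" using V_out1s[of a y1 y2] C3 y unfolding A_def by (simp add: exp2)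
          have "A*w = exp (-(y2-a))" unfolding A_def w_def by (simp add: algebra_simps flip: exp_add)
          also have "\<dots> < t" unfolding t using C3 by simp
          finally have "A*w < q*w" using wq by (simp add: mult.commute)
          hence Aq: "A < q" using w0 by simp
          have "A^2 \<le> A" unfolding A_def using C3 by (simp add: power2_eq_square)
          then show ?thesis using VA Aq ab by (intro bexI[of _ a]) auto
        qed
      qed
    next
      case False
      define al where "al = exp (-(a-y1))"
      define be where "be = exp (-(y2-a))"
      have ay: "y1 \<le> a" "a \<le> y2" using False y2a by auto
      have al0: "0 < al" unfolding al_def by simp
      have albe: "al \<le> be" unfolding al_def be_def using False by simp
      have be1: "be \<le> 1" unfolding be_def using ay by simp
      have "al*be = exp (-(y2-y1))" unfolding al_def be_def by (simp flip: exp_add)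
      also have "\<dots> < 1" using y by simp
      finally have ab1: "al*be < 1" .
      have Va: "V a y1 y2 \<le> 2*be^2/(1+be^2)"
        using V_in[of y1 a y2] ay y F_upper[OF al0 albe be1 ab1] unfolding al_def be_def by simp
      have be0: "0 < be^2" unfolding be_def by simp
      show ?thesis
      proof (cases "b \<le> y2")
        case True
        have "be \<le> t" unfolding be_def t using True by simp
        hence "be^2 \<le> t^2" using be0 by (simp add: power_mono be_def)
        hence "be^2 * q \<le> t^2 * q" using q by (simp add: mult_right_mono)
        also have "\<dots> \<le> t"
        proof -
          have "t*q \<le> 1" using t0 t1 q by (intro mult_le_one) auto
          hence "t*(t*q) \<le> t*1" using t0 by (intro mult_left_mono) auto
          thus ?thesis by (simp add: power2_eq_square mult.assoc)
        qed
        finally have "2*be^2/(1+be^2) \<le> q" using K[OF be0] by simp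
        then show ?thesis using Va ab by (intro bexI[of _ a]) auto
      next
        case False
        define ga where "ga = exp (-(b-y2))"
        have VB: "V b y1 y2 = ga^2" using V_out2s[of y2 b y1] False y unfolding ga_def by (simp add: exp2)
        have bg: "be*ga = t" unfolding be_def ga_def t by (simp add: algebra_simps flip: exp_add)
        show ?thesis
        proof (cases "be^2 * q \<le> t")
          case True
          then show ?thesis using K[OF be0 True] Va ab by (intro bexI[of _ a]) auto
        next
          case nt: False
          have "ga^2 * t < ga^2 * (be^2 * q)" using nt unfolding ga_def by simp
          also have "\<dots> = (be*ga)^2 * q" by (simp add: power_mult_distrib)
          also have "\<dots> = t^2 * q" using bg by simp
          finally have "ga^2 < t*q" using t0 by (simp add: power2_eq_square mult.commute mult.left_commute)
          also have "\<dots> < q" using t1 q by simp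
          finally show ?thesis using VB ab by (intro bexI[of _ b]) auto
        qed
      qed
    qed
  qed
qed

lemma exists_small:
  fixes a b y1 y2 t q :: real
  assumes ab: "a < b" and y: "y1 \<noteq> y2"
    and t: "t = exp (-(b-a))" and q: "0 < q" "q < 1" "t < q" "q^2 + t*q = 2*t"
  shows "\<exists>x\<in>{a..b}. V x y1 y2 \<le> q"
proof -
  have *: "\<exists>x\<in>{a..b}. V x y1 y2 \<le> q" if "y1 < y2" for y1 y2
  proof (cases "y1 + y2 \<le> 2*b")
    case True
    then show ?thesis using half[OF ab that True t q] by blast
  next
    case False
    have t': "t = exp (-((-a) - (-b)))" using t by simp
    have "-y2 + -y1 \<le> 2*(-a)" using False ab by simp
    from half[OF _ _ this t' q] ab that obtain x' where
      x': "x' \<in> {-b..-a}" "V x' (-y2) (-y1) \<le> q" by auto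
    have "V (-x') y1 y2 \<le> q" using x' V_refl by simp
    moreover have "-x' \<in> {a..b}" using x' by auto
    ultimately show ?thesis by blast
  qed
  show ?thesis
  proof (cases "y1 < y2")
    case True then show ?thesis using * by blast
  next
    case False
    hence "y2 < y1" using y by simp
    then show ?thesis using *[of y2 y1] V_sym by simp
  qed
qed

lemma INF_le:
  fixes a b y1 y2 :: real
  assumes "x \<in> {a..b}" "y1 \<noteq> y2"
  shows "(INF x\<in>{a..b}. V x y1 y2) \<le> V x y1 y2"
proof (rule cINF_lower[OF _ assms(1)])
  show "bdd_below ((\<lambda>x. V x y1 y2) ` {a..b})"
    by (rule bdd_belowI2[where m=0]) (use V_nonneg assms(2) in auto)
qed

theorem mainTheorem8:
  fixes a b :: real
  assumes "a < b"
  defines "L \<equiv> b - a"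
  defines "q \<equiv> (- exp (-L) + sqrt (exp (-2 * L) + 8 * exp (-L))) / 2"
  shows "(SUP p\<in>{(y1, y2). y1 \<noteq> y2}. INF x\<in>{a..b}. V x (fst p) (snd p)) = q
     \<and> (\<forall>y1 y2. y1 \<noteq> y2 \<longrightarrow> (INF x\<in>{a..b}. V x y1 y2) \<le> q)
     \<and> a \<le> a - ln q / 2 \<and> a - ln q / 2 < b + ln q / 2 \<and> b + ln q / 2 \<le> b
     \<and> (INF x\<in>{a..b}. V x (a - ln q / 2) (b + ln q / 2)) = q"
proof -
  define t where "t = exp (-L)"
  have t0: "0 < t" unfolding t_def by simp
  have t1: "t < 1" unfolding t_def L_def using assms(1) by simp
  have "exp (-2*L) = t^2" unfolding t_def by (rule exp2)
  hence qd: "q = (- t + sqrt (t^2 + 8*t)) / 2" unfolding q_def t_def by simp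
  from qfacts[OF t0 t1 qd] have q: "0 < q" "q < 1" "t < q" "q^2 + t*q = 2*t" by auto
  have tL: "t = exp (-(b-a))" unfolding t_def L_def by simp
  have up: "\<forall>y1 y2. y1 \<noteq> y2 \<longrightarrow> (INF x\<in>{a..b}. V x y1 y2) \<le> q"
  proof (intro allI impI)
    fix y1 y2 :: real assume y: "y1 \<noteq> y2"
    from exists_small[OF assms(1) y tL q] obtain x where x: "x \<in> {a..b}" "V x y1 y2 \<le> q" by auto
    show "(INF x\<in>{a..b}. V x y1 y2) \<le> q" using INF_le[OF x(1) y] x(2) by simp
  qed
  define y1 where "y1 = a - ln q / 2"
  define y2 where "y2 = b + ln q / 2"
  have lnq: "ln q < 0" using q by simp
  have "ln t < ln q" using q t0 by simp
  hence lnq2: "- L < ln q" unfolding t_def by simp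
  have pos: "a \<le> y1" "y1 < y2" "y2 \<le> b"
    unfolding y1_def y2_def using lnq lnq2 unfolding L_def by auto
  define r where "r = exp (-(y1 - a))"
  have r2: "r^2 = q" unfolding r_def y1_def using q by (simp add: power2_eq_square flip: exp_add)
  have r2': "(exp (-(b - y2)))^2 = q" unfolding y2_def using q by (simp add: power2_eq_square flip: exp_add)
  define w where "w = exp (-(y2 - y1))"
  have w0: "0 < w" unfolding w_def by simp
  have wq: "w * q = t"
  proof -
    have "w * q = exp (-(y2-y1) + ln q)" unfolding w_def using q by (simp add: exp_add)
    also have "\<dots> = t" unfolding t_def y1_def y2_def L_def by (simp add: algebra_simps)
    finally show ?thesis .
  qed
  have mid: "2*w/(1+w) = q"
  proof -
    have "(2*w)*q = (q+t)*q" using wq q by (simp add: power2_eq_square algebra_simps)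
    hence "2*w = q + t" using q by simp
    hence "2*w = q*(1+w)" using wq by (simp add: algebra_simps)
    thus ?thesis using w0 by (simp add: divide_eq_eq mult.commute)
  qed
  have lower: "q \<le> V x y1 y2" if x: "x \<in> {a..b}" for x
  proof -
    consider "x \<le> y1" | "y2 \<le> x" | "y1 \<le> x" "x \<le> y2" by linarith
    then show ?thesis
    proof cases
      case 1
      have "r \<le> exp (-(y1-x))" unfolding r_def using x by simp
      hence "r^2 \<le> (exp (-(y1-x)))^2" unfolding r_def by (intro power_mono) auto
      then show ?thesis using V_out1s[OF 1 pos(2)] r2 by simp
    next
      case 2
      have "exp (-(b - y2)) \<le> exp (-(x-y2))" using x by simp
      hence "(exp (-(b - y2)))^2 \<le> (exp (-(x-y2)))^2" by (intro power_mono) auto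
      then show ?thesis using V_out2s[OF 2 pos(2)] r2' by linarith
    next
      case 3
      have ab: "exp (-(x-y1)) * exp (-(y2-x)) = w" unfolding w_def by (simp flip: exp_add)
      have "w < 1" unfolding w_def using pos by simp
      then have "2*w/(1+w) \<le> F (exp (-(x-y1))) (exp (-(y2-x)))"
        using F_lower[of "exp (-(x-y1))" "exp (-(y2-x))"] ab by simp
      then show ?thesis using V_in[OF 3 pos(2)] mid by simp
    qed
  qed
  have Va: "V a y1 y2 = q" using V_out1s[OF pos(1) pos(2)] r2 unfolding r_def by simp
  have inf: "(INF x\<in>{a..b}. V x y1 y2) = q"
  proof (rule antisym)
    show "(INF x\<in>{a..b}. V x y1 y2) \<le> q" using INF_le[of a a b y1 y2] assms(1) pos Va by simp
    show "q \<le> (INF x\<in>{a..b}. V x y1 y2)" using assms(1) lower by (intro cINF_greatest) auto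
  qed
  have sup: "(SUP p\<in>{(y1, y2). y1 \<noteq> y2}. INF x\<in>{a..b}. V x (fst p) (snd p)) = q"
  proof (rule antisym)
    show "(SUP p\<in>{(y1, y2). y1 \<noteq> y2}. INF x\<in>{a..b}. V x (fst p) (snd p)) \<le> q"
    proof (rule cSUP_least)
      show "{(y1, y2). y1 \<noteq> y2} \<noteq> ({} :: (real \<times> real) set)" using pos(2) by auto
      show "(INF x\<in>{a..b}. V x (fst p) (snd p)) \<le> q" if "p \<in> {(y1, y2). y1 \<noteq> y2}" for p
        using up that by (cases p) auto
    qed
    have "(INF x\<in>{a..b}. V x (fst (y1,y2)) (snd (y1,y2)))
          \<le> (SUP p\<in>{(y1, y2). y1 \<noteq> y2}. INF x\<in>{a..b}. V x (fst p) (snd p))"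
    proof (rule cSUP_upper)
      show "(y1, y2) \<in> {(y1, y2). y1 \<noteq> y2}" using pos(2) by simp
      show "bdd_above ((\<lambda>p. INF x\<in>{a..b}. V x (fst p) (snd p)) ` {(y1, y2). y1 \<noteq> y2})"
        by (rule bdd_aboveI2[where M=q]) (use up in auto)
    qed
    then show "q \<le> (SUP p\<in>{(y1, y2). y1 \<noteq> y2}. INF x\<in>{a..b}. V x (fst p) (snd p))"
      using inf by simp
  qed
  show ?thesis using sup up pos inf unfolding y1_def y2_def by auto
qed

end
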